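(* Every real hypersurface $M^3$ in $\mathbb{C}P^2$ or $\mathbb{C}H^2$ satisfies $\langle S^*X,Y\rangle=\frac{\rho^*}{2}\langle X,Y\rangle$ for all $X,Y\in W^\perp$, with $$\frac{\rho^*}{2}=4c+\lambda\nu-\mu^2,$$ where, at each point, $X_0\in W^\perp$ is a unit vector with $\langle AW,\varphi X_0\rangle=0$ (e.g. $X_0$ the unit vector with $AW=\alpha W+\beta X_0$, $\beta>0$, where $AW\ne\alpha W$), $Y_0=\varphi X_0$, $\lambda=\langle AX_0,X_0\rangle$, $\mu=\langle AX_0,Y_0\rangle$, $\nu=\langle AY_0,Y_0\rangle$.
   Context: $\mathbb{C}P^2$, $\mathbb{C}H^2$ carry Kähler metrics of constant holomorphic sectional curvature $4c\ne0$, complex structure $J$, connection $\widetilde\nabla$. For a real hypersurface $M$ with unit normal $\xi$: $W$ with $JW=\xi$; $W^\perp$ the holomorphic distribution; $\varphi X=JX-\langle X,W\rangle\xi$; $AX=-\widetilde\nabla_X\xi$; $\alpha=\langle AW,W\rangle$; $R$ the curvature tensor of $M$ ($R(X,Y)=\nabla_X\nabla_Y-\nabla_Y\nabla_X-\nabla_{[X,Y]}$). The *-Ricci tensor $S^*$ is defined by $\langle S^*X,Y\rangle=\tfrac12\operatorname{trace}\{Z\mapsto\varphi R(X,\varphi Y)Z\}$ and $\rho^*=\operatorname{trace}S^*$. *)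

theory Defs
  imports "HOL-Analysis.Analysis"
begin

text \<open>Pointwise (tangent-space) model of a real hypersurface M^3 in CP^2 / CH^2.
  The ambient tangent space at a point is a 4-dimensional Euclidean space with
  an orthogonal complex structure J; \<xi> is the unit normal, T = \<xi>-orthogonal
  complement is the tangent space of M, A the shape operator.\<close>

definition tproj :: "'a::real_inner \<Rightarrow> 'a \<Rightarrow> 'a" where
  "tproj \<xi> x = x - inner x \<xi> *\<^sub>R \<xi>"

text \<open>W with J W = \<xi>, i.e. W = - J \<xi>.\<close>
definition Wvec :: "('a::real_inner \<Rightarrow> 'a) \<Rightarrow> 'a \<Rightarrow> 'a" where
  "Wvec J \<xi> = - J \<xi>"

definition phi :: "('a::real_inner \<Rightarrow> 'a) \<Rightarrow> 'a \<Rightarrow> 'a \<Rightarrow> 'a" where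
  "phi J \<xi> X = J X - inner X (Wvec J \<xi>) *\<^sub>R \<xi>"

text \<open>Curvature tensor of the complex space form of constant holomorphic
  sectional curvature 4c, convention R(X,Y) = [\<nabla>X,\<nabla>Y] - \<nabla>[X,Y].\<close>
definition ambR :: "real \<Rightarrow> ('a::real_inner \<Rightarrow> 'a) \<Rightarrow> 'a \<Rightarrow> 'a \<Rightarrow> 'a \<Rightarrow> 'a" where
  "ambR c J X Y Z = c *\<^sub>R (inner Y Z *\<^sub>R X - inner X Z *\<^sub>R Y
      + inner (J Y) Z *\<^sub>R J X - inner (J X) Z *\<^sub>R J Y - (2 * inner (J X) Y) *\<^sub>R J Z)"

text \<open>Curvature tensor of M via the Gauss equation.\<close>
definition hypR :: "real \<Rightarrow> ('a::real_inner \<Rightarrow> 'a) \<Rightarrow> 'a \<Rightarrow> ('a \<Rightarrow> 'a) \<Rightarrow> 'a \<Rightarrow> 'a \<Rightarrow> 'a \<Rightarrow> 'a" where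
  "hypR c J \<xi> A X Y Z = tproj \<xi> (ambR c J X Y Z)
      + inner (A Y) Z *\<^sub>R A X - inner (A X) Z *\<^sub>R A Y"

text \<open>Trace of an endomorphism of the tangent space T (trace of its compression).\<close>
definition trT :: "'a::euclidean_space \<Rightarrow> ('a \<Rightarrow> 'a) \<Rightarrow> real" where
  "trT \<xi> f = (\<Sum>b\<in>Basis. inner (tproj \<xi> (f (tproj \<xi> b))) b)"

definition SstarForm :: "real \<Rightarrow> ('a::euclidean_space \<Rightarrow> 'a) \<Rightarrow> 'a \<Rightarrow> ('a \<Rightarrow> 'a) \<Rightarrow> 'a \<Rightarrow> 'a \<Rightarrow> real" where
  "SstarForm c J \<xi> A X Y = trT \<xi> (\<lambda>Z. phi J \<xi> (hypR c J \<xi> A X (phi J \<xi> Y) Z)) / 2"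

definition rhostar :: "real \<Rightarrow> ('a::euclidean_space \<Rightarrow> 'a) \<Rightarrow> 'a \<Rightarrow> ('a \<Rightarrow> 'a) \<Rightarrow> real" where
  "rhostar c J \<xi> A = (\<Sum>b\<in>Basis. SstarForm c J \<xi> A (tproj \<xi> b) (tproj \<xi> b))"

end

theory Submission imports Defs begin
lemma lin_tproj: "linear (tproj \<xi>)"
  unfolding linear_iff tproj_def by (simp add: algebra_simps inner_add_left)
lemma lin_phi: "linear J \<Longrightarrow> linear (phi J \<xi>)"
  unfolding linear_iff phi_def by (simp add: algebra_simps inner_add_left linear_add linear_scale)
lemma lin_ambR_Z: "linear J \<Longrightarrow> linear (\<lambda>Z. ambR c J X Y Z)"
  unfolding linear_iff ambR_def by (simp add: algebra_simps inner_add_right linear_add linear_scale)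
lemma lin_hypR_Z: "linear J \<Longrightarrow> linear (\<lambda>Z. hypR c J \<xi> A X Y Z)"
proof -
  assume "linear J"
  then have l1: "linear (\<lambda>Z. ambR c J X Y Z)" by (rule lin_ambR_Z)
  show ?thesis unfolding linear_iff hypR_def
  proof (intro allI conjI)
    fix x y :: 'a
    show "tproj \<xi> (ambR c J X Y (x + y)) + (A Y \<bullet> (x + y)) *\<^sub>R A X - (A X \<bullet> (x + y)) *\<^sub>R A Y =
       tproj \<xi> (ambR c J X Y x) + (A Y \<bullet> x) *\<^sub>R A X - (A X \<bullet> x) *\<^sub>R A Y +
       (tproj \<xi> (ambR c J X Y y) + (A Y \<bullet> y) *\<^sub>R A X - (A X \<bullet> y) *\<^sub>R A Y)"
      using linear_add[OF l1] linear_add[OF lin_tproj]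
      by (simp add: inner_add_right scaleR_add_left)
  next
    fix r and x :: 'a
    show "tproj \<xi> (ambR c J X Y (r *\<^sub>R x)) + (A Y \<bullet> (r *\<^sub>R x)) *\<^sub>R A X - (A X \<bullet> (r *\<^sub>R x)) *\<^sub>R A Y =
       r *\<^sub>R (tproj \<xi> (ambR c J X Y x) + (A Y \<bullet> x) *\<^sub>R A X - (A X \<bullet> x) *\<^sub>R A Y)"
      using linear_scale[OF l1] linear_scale[OF lin_tproj]
      by (simp add: scaleR_diff_right scaleR_add_right linear_scale[OF lin_tproj] mult.commute)
  qed
qed

lemma lin_ambR_X: "linear J \<Longrightarrow> linear (\<lambda>X. ambR c J X Y Z)"
  unfolding linear_iff ambR_def by (simp add: algebra_simps inner_add_left linear_add linear_scale)
lemma lin_ambR_Y: "linear J \<Longrightarrow> linear (\<lambda>Y. ambR c J X Y Z)"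
  unfolding linear_iff ambR_def by (simp add: algebra_simps inner_add_left inner_add_right linear_add linear_scale)

lemma lin_hypR_X: "linear J \<Longrightarrow> linear A \<Longrightarrow> linear (\<lambda>X. hypR c J \<xi> A X Y Z)"
proof -
  assume lJ: "linear J" and lA: "linear A"
  from lJ have l1: "linear (\<lambda>X. ambR c J X Y Z)" by (rule lin_ambR_X)
  show ?thesis unfolding linear_iff hypR_def
  proof (intro allI conjI)
    fix x y :: 'a
    show "tproj \<xi> (ambR c J (x + y) Y Z) + (A Y \<bullet> Z) *\<^sub>R A (x + y) - (A (x + y) \<bullet> Z) *\<^sub>R A Y =
       tproj \<xi> (ambR c J x Y Z) + (A Y \<bullet> Z) *\<^sub>R A x - (A x \<bullet> Z) *\<^sub>R A Y +
       (tproj \<xi> (ambR c J y Y Z) + (A Y \<bullet> Z) *\<^sub>R A y - (A y \<bullet> Z) *\<^sub>R A Y)"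
      using linear_add[OF l1] linear_add[OF lin_tproj] linear_add[OF lA]
      by (simp add: inner_add_left scaleR_add_left scaleR_add_right)
  next
    fix r and x :: 'a
    show "tproj \<xi> (ambR c J (r *\<^sub>R x) Y Z) + (A Y \<bullet> Z) *\<^sub>R A (r *\<^sub>R x) - (A (r *\<^sub>R x) \<bullet> Z) *\<^sub>R A Y =
       r *\<^sub>R (tproj \<xi> (ambR c J x Y Z) + (A Y \<bullet> Z) *\<^sub>R A x - (A x \<bullet> Z) *\<^sub>R A Y)"
      using linear_scale[OF l1] linear_scale[OF lin_tproj] linear_scale[OF lA]
      by (simp add: scaleR_diff_right scaleR_add_right linear_scale[OF lin_tproj] mult.commute)
  qed
qed

lemma lin_hypR_Y: "linear J \<Longrightarrow> linear A \<Longrightarrow> linear (\<lambda>Y. hypR c J \<xi> A X Y Z)"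
proof -
  assume lJ: "linear J" and lA: "linear A"
  from lJ have l1: "linear (\<lambda>Y. ambR c J X Y Z)" by (rule lin_ambR_Y)
  show ?thesis unfolding linear_iff hypR_def
  proof (intro allI conjI)
    fix x y :: 'a
    show "tproj \<xi> (ambR c J X (x + y) Z) + (A (x + y) \<bullet> Z) *\<^sub>R A X - (A X \<bullet> Z) *\<^sub>R A (x + y) =
       tproj \<xi> (ambR c J X x Z) + (A x \<bullet> Z) *\<^sub>R A X - (A X \<bullet> Z) *\<^sub>R A x +
       (tproj \<xi> (ambR c J X y Z) + (A y \<bullet> Z) *\<^sub>R A X - (A X \<bullet> Z) *\<^sub>R A y)"
      using linear_add[OF l1] linear_add[OF lin_tproj] linear_add[OF lA]
      by (simp add: inner_add_left scaleR_add_left scaleR_add_right)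
  next
    fix r and x :: 'a
    show "tproj \<xi> (ambR c J X (r *\<^sub>R x) Z) + (A (r *\<^sub>R x) \<bullet> Z) *\<^sub>R A X - (A X \<bullet> Z) *\<^sub>R A (r *\<^sub>R x) =
       r *\<^sub>R (tproj \<xi> (ambR c J X x Z) + (A x \<bullet> Z) *\<^sub>R A X - (A X \<bullet> Z) *\<^sub>R A x)"
      using linear_scale[OF l1] linear_scale[OF lin_tproj] linear_scale[OF lA]
      by (simp add: scaleR_diff_right scaleR_add_right linear_scale[OF lin_tproj] mult.commute)
  qed
qed
lemma frame_expand:
  fixes u1 u2 u3 u4 x :: "'a::euclidean_space"
  assumes dim: "DIM('a) = 4"
    and n: "norm u1 = 1" "norm u2 = 1" "norm u3 = 1" "norm u4 = 1"
    and o: "inner u1 u2 = 0" "inner u1 u3 = 0" "inner u1 u4 = 0"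
           "inner u2 u3 = 0" "inner u2 u4 = 0" "inner u3 u4 = 0"
  shows "x = inner x u1 *\<^sub>R u1 + inner x u2 *\<^sub>R u2 + inner x u3 *\<^sub>R u3 + inner x u4 *\<^sub>R u4"
proof (rule ccontr)
  define y where "y = x - (inner x u1 *\<^sub>R u1 + inner x u2 *\<^sub>R u2 + inner x u3 *\<^sub>R u3 + inner x u4 *\<^sub>R u4)"
  have nn: "inner u1 u1 = 1" "inner u2 u2 = 1" "inner u3 u3 = 1" "inner u4 u4 = 1"
    using n by (simp_all add: norm_eq_sqrt_inner)
  have oc: "inner u2 u1 = 0" "inner u3 u1 = 0" "inner u4 u1 = 0"
           "inner u3 u2 = 0" "inner u4 u2 = 0" "inner u4 u3 = 0"
    using o by (simp_all add: inner_commute)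
  have yo: "inner y u1 = 0" "inner y u2 = 0" "inner y u3 = 0" "inner y u4 = 0"
    unfolding y_def by (simp_all add: inner_diff_left inner_add_left nn o oc)
  assume "\<not> ?thesis"
  hence "y \<noteq> 0" unfolding y_def by simp
  define S where "S = {u1,u2,u3,u4,y}"
  have nz: "u1 \<noteq> 0" "u2 \<noteq> 0" "u3 \<noteq> 0" "u4 \<noteq> 0" using n by auto
  have d: "u1 \<noteq> u2" "u1 \<noteq> u3" "u1 \<noteq> u4" "u2 \<noteq> u3" "u2 \<noteq> u4" "u3 \<noteq> u4"
     "u1 \<noteq> y" "u2 \<noteq> y" "u3 \<noteq> y" "u4 \<noteq> y"
    using nn o yo by (auto)
  have "pairwise orthogonal S"
    unfolding S_def pairwise_def orthogonal_def
    using o oc yo by (auto simp: inner_commute)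
  moreover have "0 \<notin> S" using nz \<open>y \<noteq> 0\<close> unfolding S_def by auto
  ultimately have "independent S" by (rule pairwise_orthogonal_independent)
  hence "card S \<le> 4" using independent_bound dim by metis
  moreover have "card S = 5" unfolding S_def using d by simp
  ultimately show False by simp
qed

lemma sum_basis_prod: "(\<Sum>b\<in>Basis. inner b u * inner b v * k) = inner u v * (k::real)"
  by (simp add: euclidean_inner[of u v] sum_distrib_right inner_commute)

lemma sum_basis_prod2: "(\<Sum>b\<in>Basis. inner b u * (inner b v * k)) = inner u v * (k::real)"
  using sum_basis_prod[of u v k] by (simp add: mult.assoc)

lemma trace_bilinear:
  fixes u1 u2 u3 u4 :: "'a::euclidean_space" and B :: "'a \<Rightarrow> 'a \<Rightarrow> real"
  assumes dim: "DIM('a) = 4"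
    and n: "norm u1 = 1" "norm u2 = 1" "norm u3 = 1" "norm u4 = 1"
    and o: "inner u1 u2 = 0" "inner u1 u3 = 0" "inner u1 u4 = 0"
           "inner u2 u3 = 0" "inner u2 u4 = 0" "inner u3 u4 = 0"
    and bl: "bilinear B"
  shows "(\<Sum>b\<in>Basis. B b b) = B u1 u1 + B u2 u2 + B u3 u3 + B u4 u4"
proof -
  have nn: "inner u1 u1 = 1" "inner u2 u2 = 1" "inner u3 u3 = 1" "inner u4 u4 = 1"
    using n by (simp_all add: norm_eq_sqrt_inner)
  have oc: "inner u2 u1 = 0" "inner u3 u1 = 0" "inner u4 u1 = 0"
           "inner u3 u2 = 0" "inner u4 u2 = 0" "inner u4 u3 = 0"
    using o by (simp_all add: inner_commute)
  have e: "\<And>x. x = inner x u1 *\<^sub>R u1 + inner x u2 *\<^sub>R u2 + inner x u3 *\<^sub>R u3 + inner x u4 *\<^sub>R u4"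
    by (rule frame_expand[OF dim n o])
  have "(\<Sum>b\<in>Basis. B b b) = (\<Sum>b\<in>Basis. B (inner b u1 *\<^sub>R u1 + inner b u2 *\<^sub>R u2 + inner b u3 *\<^sub>R u3 + inner b u4 *\<^sub>R u4)
                     (inner b u1 *\<^sub>R u1 + inner b u2 *\<^sub>R u2 + inner b u3 *\<^sub>R u3 + inner b u4 *\<^sub>R u4))"
    using e by (metis (no_types, lifting))
  also have "\<dots> = B u1 u1 + B u2 u2 + B u3 u3 + B u4 u4"
    by (simp add: bilinear_ladd[OF bl] bilinear_radd[OF bl] bilinear_lmul[OF bl] bilinear_rmul[OF bl]
       distrib_left sum.distrib sum_basis_prod2 nn o oc)
  finally show ?thesis .
qed

lemma trT_frame:
  fixes w x y \<xi> :: "'a::euclidean_space"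
  assumes dim: "DIM('a) = 4"
    and n: "norm w = 1" "norm x = 1" "norm y = 1" "norm \<xi> = 1"
    and o: "inner w x = 0" "inner w y = 0" "inner w \<xi> = 0"
           "inner x y = 0" "inner x \<xi> = 0" "inner y \<xi> = 0"
    and lf: "linear f"
  shows "trT \<xi> f = inner (f w) w + inner (f x) x + inner (f y) y"
proof -
  have bl: "bilinear (\<lambda>a b. inner (tproj \<xi> (f (tproj \<xi> a))) b)"
  proof -
    have l2: "linear (\<lambda>a. tproj \<xi> (f (tproj \<xi> a)))"
      using linear_compose[OF linear_compose[OF lin_tproj lf] lin_tproj] by (simp add: o_def)
    show ?thesis unfolding bilinear_def
    proof (intro allI conjI)
      fix a show "linear (\<lambda>b. inner (tproj \<xi> (f (tproj \<xi> a))) b)"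
        by (simp add: bounded_linear_inner_right bounded_linear.linear)
    next
      fix b show "linear (\<lambda>a. inner (tproj \<xi> (f (tproj \<xi> a))) b)"
        using linear_compose[OF l2 bounded_linear.linear[OF bounded_linear_inner_left[of b]]]
        by (simp add: o_def)
    qed
  qed
  have nx: "inner \<xi> \<xi> = 1" using n by (simp add: norm_eq_sqrt_inner)
  have p: "tproj \<xi> w = w" "tproj \<xi> x = x" "tproj \<xi> y = y" "tproj \<xi> \<xi> = 0"
    using o nx by (simp_all add: tproj_def)
  have ip: "\<And>v u. inner u \<xi> = 0 \<Longrightarrow> inner (tproj \<xi> v) u = inner v u"
    by (simp add: tproj_def inner_diff_left inner_commute[of _ \<xi>])
  show ?thesis
    unfolding trT_def
    apply (subst trace_bilinear[OF dim n o bl])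
    using lf by (simp only: p) (simp add: ip o linear_0 linear_0[OF lin_tproj])
qed


lemma main_frame:
  fixes c :: real and J :: "'a::euclidean_space \<Rightarrow> 'a" and \<xi> :: 'a and A :: "'a \<Rightarrow> 'a"
  assumes dim: "DIM('a) = 4"
    and J_lin: "linear J"
    and J_sq: "\<And>x. J (J x) = - x"
    and J_orth: "\<And>x y. inner (J x) (J y) = inner x y"
    and xi_unit: "norm \<xi> = 1"
    and A_lin: "linear A"
    and A_tan: "\<And>X. inner X \<xi> = 0 \<Longrightarrow> inner (A X) \<xi> = 0"
    and A_sym: "\<And>X Y. inner X \<xi> = 0 \<Longrightarrow> inner Y \<xi> = 0 \<Longrightarrow> inner (A X) Y = inner X (A Y)"
    and X0: "inner X0 \<xi> = 0" "inner X0 (Wvec J \<xi>) = 0" "norm X0 = 1"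
  shows "rhostar c J \<xi> A / 2 = 4 * c + inner (A X0) X0 * inner (A (phi J \<xi> X0)) (phi J \<xi> X0)
                    - (inner (A X0) (phi J \<xi> X0))\<^sup>2"
    and "\<And>X Y. inner X \<xi> = 0 \<Longrightarrow> inner X (Wvec J \<xi>) = 0 \<Longrightarrow>
                inner Y \<xi> = 0 \<Longrightarrow> inner Y (Wvec J \<xi>) = 0 \<Longrightarrow>
                SstarForm c J \<xi> A X Y = rhostar c J \<xi> A / 2 * inner X Y"
proof -
  define w where "w = Wvec J \<xi>"
  define Y0 where "Y0 = J X0"
  have Jskew: "\<And>x y. inner (J x) y = - inner x (J y)"
    using J_orth J_sq by (metis inner_minus_left)
  have Jxx: "\<And>x. inner (J x) x = 0"
    using Jskew by (metis add.inverse_unique add_cancel_left_left inner_commute neg_equal_zero)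
  have xx: "inner \<xi> \<xi> = 1" using xi_unit by (simp add: norm_eq_sqrt_inner)
  have x0x0: "inner X0 X0 = 1" using X0 by (simp add: norm_eq_sqrt_inner)
  have X0': "inner X0 w = 0" using X0 w_def by simp
  have Jw: "J w = \<xi>" unfolding w_def Wvec_def using J_sq linear_neg[OF J_lin] by simp
  have Jxi: "J \<xi> = - w" unfolding w_def Wvec_def by simp
  have JX0: "J X0 = Y0" using Y0_def by simp
  have JY0: "J Y0 = - X0" using Y0_def J_sq by simp
  have ww: "inner w w = 1" using J_orth[of \<xi> \<xi>] xx unfolding w_def Wvec_def by simp
  have wxi: "inner w \<xi> = 0" using Jxx[of \<xi>] unfolding w_def Wvec_def by simp
  have y0y0: "inner Y0 Y0 = 1" using J_orth[of X0 X0] x0x0 Y0_def by simp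
  have y0x0: "inner Y0 X0 = 0" using Jxx Y0_def by simp
  have y0xi: "inner Y0 \<xi> = 0" using Jskew[of X0 \<xi>] Jxi X0' Y0_def by (simp add: inner_commute)
  have y0w: "inner Y0 w = 0" using Jskew[of X0 w] Jw X0 Y0_def by simp
  have frame: "inner w X0 = 0" "inner w Y0 = 0" "inner w \<xi> = 0"
     "inner X0 Y0 = 0" "inner X0 \<xi> = 0" "inner Y0 \<xi> = 0"
     "inner X0 w = 0" "inner Y0 w = 0" "inner \<xi> w = 0"
     "inner Y0 X0 = 0" "inner \<xi> X0 = 0" "inner \<xi> Y0 = 0"
     "inner w w = 1" "inner X0 X0 = 1" "inner Y0 Y0 = 1" "inner \<xi> \<xi> = 1"
    using X0 X0' wxi y0xi y0w y0x0 ww x0x0 y0y0 xx by (simp_all add: inner_commute)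
  have nrm: "norm w = 1" "norm X0 = 1" "norm Y0 = 1" "norm \<xi> = 1"
    using frame by (simp_all add: norm_eq_sqrt_inner)
  note fr = frame_expand[OF dim nrm(1-4) frame(1-6)]
  define al where "al = inner (A w) w"
  define p where "p = inner (A w) X0"
  define q where "q = inner (A w) Y0"
  define la where "la = inner (A X0) X0"
  define mu where "mu = inner (A X0) Y0"
  define nu where "nu = inner (A Y0) Y0"
  have Aw: "A w = al *\<^sub>R w + p *\<^sub>R X0 + q *\<^sub>R Y0"
    using fr[of "A w"] A_tan[of w] frame al_def p_def q_def by simp
  have AX0: "A X0 = p *\<^sub>R w + la *\<^sub>R X0 + mu *\<^sub>R Y0"
    using fr[of "A X0"] A_tan[of X0] frame la_def p_def mu_def A_sym[of X0 w] by (simp add: inner_commute)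
  have AY0: "A Y0 = q *\<^sub>R w + mu *\<^sub>R X0 + nu *\<^sub>R Y0"
    using fr[of "A Y0"] A_tan[of Y0] frame nu_def q_def mu_def A_sym[of Y0 w] A_sym[of Y0 X0]
    by (simp add: inner_commute)
  define g where "g = (\<lambda>X Y u. inner (phi J \<xi> (hypR c J \<xi> A X (phi J \<xi> Y) u)) u)"
  note simps = frame Jw Jxi JX0 JY0 Aw AX0 AY0 linear_add[OF J_lin] linear_scale[OF J_lin]
     linear_neg[OF J_lin] linear_diff[OF J_lin] linear_add[OF A_lin] linear_scale[OF A_lin]
     linear_neg[OF A_lin] linear_diff[OF A_lin] phi_def hypR_def ambR_def tproj_def g_def w_def[symmetric]
     inner_add_left inner_add_right inner_diff_left inner_diff_right inner_minus_left inner_minus_right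
  have g_w_w_w: "g w w w = 0" by (simp add: simps)
  have g_w_w_X0: "g w w X0 = 0" by (simp add: simps)
  have g_w_w_Y0: "g w w Y0 = 0" by (simp add: simps)
  have g_X0_X0_w: "g X0 X0 w = 0" by (simp add: simps)
  have g_X0_X0_X0: "g X0 X0 X0 = (4 * c - mu * mu + la * nu)" by (simp add: simps)
  have g_X0_X0_Y0: "g X0 X0 Y0 = (4 * c - mu * mu + la * nu)" by (simp add: simps)
  have g_Y0_Y0_w: "g Y0 Y0 w = 0" by (simp add: simps)
  have g_Y0_Y0_X0: "g Y0 Y0 X0 = (4 * c - mu * mu + la * nu)" by (simp add: simps)
  have g_Y0_Y0_Y0: "g Y0 Y0 Y0 = (4 * c - mu * mu + la * nu)" by (simp add: simps)
  have g_X0_Y0_w: "g X0 Y0 w = 0" by (simp add: simps)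
  have g_X0_Y0_X0: "g X0 Y0 X0 = 0" by (simp add: simps)
  have g_X0_Y0_Y0: "g X0 Y0 Y0 = 0" by (simp add: simps)
  have g_Y0_X0_w: "g Y0 X0 w = 0" by (simp add: simps)
  have g_Y0_X0_X0: "g Y0 X0 X0 = 0" by (simp add: simps)
  have g_Y0_X0_Y0: "g Y0 X0 Y0 = 0" by (simp add: simps)

  define Sp where "Sp = (\<lambda>X Y. (g X Y w + g X Y X0 + g X Y Y0) / 2)"
  define K where "K = 4 * c - mu * mu + la * nu"
  have SpV: "Sp w w = 0" "Sp X0 X0 = K" "Sp Y0 Y0 = K" "Sp X0 Y0 = 0" "Sp Y0 X0 = 0"
    unfolding Sp_def K_def using g_w_w_w g_w_w_X0 g_w_w_Y0 g_X0_X0_w g_X0_X0_X0 g_X0_X0_Y0 g_Y0_Y0_w g_Y0_Y0_X0 g_Y0_Y0_Y0 g_X0_Y0_w g_X0_Y0_X0 g_X0_Y0_Y0 g_Y0_X0_w g_Y0_X0_X0 g_Y0_X0_Y0 by simp_all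
  have lg1: "\<And>Y u. linear (\<lambda>X. g X Y u)"
  proof -
    fix Y u
    show "linear (\<lambda>X. g X Y u)"
      using linear_compose[OF linear_compose[OF lin_hypR_X[OF J_lin A_lin, of c \<xi> "phi J \<xi> Y" u] lin_phi[OF J_lin, of \<xi>]]
             bounded_linear.linear[OF bounded_linear_inner_left[of u]]]
      unfolding g_def by (simp add: o_def)
  qed
  have lg2: "\<And>X u. linear (\<lambda>Y. g X Y u)"
  proof -
    fix X u
    show "linear (\<lambda>Y. g X Y u)"
      using linear_compose[OF linear_compose[OF linear_compose[OF lin_phi[OF J_lin, of \<xi>] lin_hypR_Y[OF J_lin A_lin, of c \<xi> X u]] lin_phi[OF J_lin, of \<xi>]]
             bounded_linear.linear[OF bounded_linear_inner_left[of u]]]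
      unfolding g_def by (simp add: o_def)
  qed
  have lS1: "\<And>Y. linear (\<lambda>X. Sp X Y)"
    unfolding Sp_def linear_iff
    by (simp add: linear_add[OF lg1] linear_scale[OF lg1] add_divide_distrib algebra_simps)
  have lS2: "\<And>X. linear (\<lambda>Y. Sp X Y)"
    unfolding Sp_def linear_iff
    by (simp add: linear_add[OF lg2] linear_scale[OF lg2] add_divide_distrib algebra_simps)
  have SS: "\<And>X Y. SstarForm c J \<xi> A X Y = Sp X Y"
  proof -
    fix X Y
    have "linear (\<lambda>Z. phi J \<xi> (hypR c J \<xi> A X (phi J \<xi> Y) Z))"
      using linear_compose[OF lin_hypR_Z[OF J_lin, of c \<xi> A X "phi J \<xi> Y"] lin_phi[OF J_lin, of \<xi>]]
      by (simp add: o_def)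
    then show "SstarForm c J \<xi> A X Y = Sp X Y"
      unfolding SstarForm_def Sp_def g_def
      by (simp add: trT_frame[OF dim nrm frame(1-6)])
  qed
  have bl: "bilinear (\<lambda>x y. Sp (tproj \<xi> x) (tproj \<xi> y))"
    unfolding bilinear_def
  proof (intro allI conjI)
    fix x show "linear (\<lambda>y. Sp (tproj \<xi> x) (tproj \<xi> y))"
      using linear_compose[OF lin_tproj lS2] by (simp add: o_def)
  next
    fix y show "linear (\<lambda>x. Sp (tproj \<xi> x) (tproj \<xi> y))"
      using linear_compose[OF lin_tproj lS1] by (simp add: o_def)
  qed
  have p: "tproj \<xi> w = w" "tproj \<xi> X0 = X0" "tproj \<xi> Y0 = Y0" "tproj \<xi> \<xi> = 0"
    using frame by (simp_all add: tproj_def)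
  have S00: "Sp 0 0 = 0" using linear_0[OF lS1] by simp
  have rho: "rhostar c J \<xi> A = 2 * K"
    unfolding rhostar_def SS
    by (subst trace_bilinear[OF dim nrm frame(1-6) bl]) (simp add: p S00 SpV)
  show "rhostar c J \<xi> A / 2 = 4 * c + inner (A X0) X0 * inner (A (phi J \<xi> X0)) (phi J \<xi> X0)
                    - (inner (A X0) (phi J \<xi> X0))\<^sup>2"
  proof -
    have "phi J \<xi> X0 = Y0" using JX0 X0 unfolding phi_def by simp
    then show ?thesis using rho K_def la_def mu_def nu_def by (simp add: power2_eq_square)
  qed
  show "\<And>X Y. inner X \<xi> = 0 \<Longrightarrow> inner X (Wvec J \<xi>) = 0 \<Longrightarrow>
                inner Y \<xi> = 0 \<Longrightarrow> inner Y (Wvec J \<xi>) = 0 \<Longrightarrow>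
                SstarForm c J \<xi> A X Y = rhostar c J \<xi> A / 2 * inner X Y"
  proof -
    fix X Y :: 'a
    assume h: "inner X \<xi> = 0" "inner X (Wvec J \<xi>) = 0" "inner Y \<xi> = 0" "inner Y (Wvec J \<xi>) = 0"
    have eX: "X = inner X X0 *\<^sub>R X0 + inner X Y0 *\<^sub>R Y0"
      using fr[of X] h w_def by (simp add: inner_commute)
    have eY: "Y = inner Y X0 *\<^sub>R X0 + inner Y Y0 *\<^sub>R Y0"
      using fr[of Y] h w_def by (simp add: inner_commute)
    have "Sp X Y = Sp (inner X X0 *\<^sub>R X0 + inner X Y0 *\<^sub>R Y0) (inner Y X0 *\<^sub>R X0 + inner Y Y0 *\<^sub>R Y0)"
      using eX eY by metis
    also have "\<dots> = K * (inner X X0 * inner Y X0 + inner X Y0 * inner Y Y0)"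
      by (simp add: linear_add[OF lS1] linear_scale[OF lS1] linear_add[OF lS2] linear_scale[OF lS2] SpV algebra_simps)
    also have "inner X Y = inner X X0 * inner Y X0 + inner X Y0 * inner Y Y0"
      apply (subst eX, subst eY) by (simp add: inner_add_left inner_add_right frame inner_commute)
    ultimately show "SstarForm c J \<xi> A X Y = rhostar c J \<xi> A / 2 * inner X Y"
      using SS rho by simp
  qed
qed

theorem proposition14:
  fixes c :: real and J :: "'a::euclidean_space \<Rightarrow> 'a" and \<xi> :: 'a and A :: "'a \<Rightarrow> 'a"
  assumes dim: "DIM('a) = 4"
    and c: "c \<noteq> 0"
    and J_lin: "linear J"
    and J_sq: "\<And>x. J (J x) = - x"
    and J_orth: "\<And>x y. inner (J x) (J y) = inner x y"
    and xi_unit: "norm \<xi> = 1"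
    and A_lin: "linear A"
    and A_tan: "\<And>X. inner X \<xi> = 0 \<Longrightarrow> inner (A X) \<xi> = 0"
    and A_sym: "\<And>X Y. inner X \<xi> = 0 \<Longrightarrow> inner Y \<xi> = 0 \<Longrightarrow> inner (A X) Y = inner X (A Y)"
  shows "(\<forall>X Y. inner X \<xi> = 0 \<and> inner X (Wvec J \<xi>) = 0 \<and>
                inner Y \<xi> = 0 \<and> inner Y (Wvec J \<xi>) = 0 \<longrightarrow>
                SstarForm c J \<xi> A X Y = rhostar c J \<xi> A / 2 * inner X Y)
    \<and> (\<forall>X0. inner X0 \<xi> = 0 \<and> inner X0 (Wvec J \<xi>) = 0 \<and> norm X0 = 1 \<and>
            inner (A (Wvec J \<xi>)) (phi J \<xi> X0) = 0 \<longrightarrow>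
            rhostar c J \<xi> A / 2 =
              4 * c + inner (A X0) X0 * inner (A (phi J \<xi> X0)) (phi J \<xi> X0)
                    - (inner (A X0) (phi J \<xi> X0))\<^sup>2)"
proof (intro conjI allI impI)
  fix X Y :: 'a
  assume h: "inner X \<xi> = 0 \<and> inner X (Wvec J \<xi>) = 0 \<and> inner Y \<xi> = 0 \<and> inner Y (Wvec J \<xi>) = 0"
  have "dim {\<xi>, Wvec J \<xi>} \<le> card {\<xi>, Wvec J \<xi>}" by (rule dim_le_card') simp
  also have "\<dots> \<le> 2" by (simp add: card_insert_le_m1)
  finally have "dim {\<xi>, Wvec J \<xi>} < DIM('a)" using dim by simp
  then obtain x where x: "x \<noteq> 0" "\<And>y. y \<in> span {\<xi>, Wvec J \<xi>} \<Longrightarrow> orthogonal x y"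
    using orthogonal_to_subspace_exists by blast
  define X0 where "X0 = x /\<^sub>R norm x"
  have o1: "inner x \<xi> = 0" "inner x (Wvec J \<xi>) = 0"
    using x(2)[of \<xi>] x(2)[of "Wvec J \<xi>"] by (auto simp: orthogonal_def span_base)
  have "inner X0 \<xi> = 0" "inner X0 (Wvec J \<xi>) = 0" "norm X0 = 1"
    using o1 x(1) unfolding X0_def by simp_all
  from main_frame(2)[OF dim J_lin J_sq J_orth xi_unit A_lin A_tan A_sym this] h
  show "SstarForm c J \<xi> A X Y = rhostar c J \<xi> A / 2 * inner X Y" by blast
next
  fix X0 :: 'a
  assume h: "inner X0 \<xi> = 0 \<and> inner X0 (Wvec J \<xi>) = 0 \<and> norm X0 = 1 \<and>
            inner (A (Wvec J \<xi>)) (phi J \<xi> X0) = 0"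
  then show "rhostar c J \<xi> A / 2 =
              4 * c + inner (A X0) X0 * inner (A (phi J \<xi> X0)) (phi J \<xi> X0)
                    - (inner (A X0) (phi J \<xi> X0))\<^sup>2"
    using main_frame(1)[OF dim J_lin J_sq J_orth xi_unit A_lin A_tan A_sym] by blast
qed

end
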